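(* In the setting described in the context, assume $$\sum_{x\in A}\alpha_x<\sum_{y\in N(A)}\beta_y\qquad\text{for all nonempty } A\subseteq\mathcal X,$$ where $N(A)=\bigcup_{x\in A}N_x$. Then $W(t)$, restricted to the set $\mathcal W$ of allocation states, is an ergodic time-reversible Markov process whose unique invariant probability measure is $$\mu_\gamma(W)=\frac{\binom{\alpha}{W}e^{\gamma\Psi(W)}}{\sum_{W'\in\mathcal W}\binom{\alpha}{W'}e^{\gamma\Psi(W')}},\qquad W\in\mathcal W,$$ where $\binom{\alpha}{W}=\frac{\prod_x\alpha_x!}{\prod_{x,y}W_{xy}!}$ and $\Psi(W)=\sum_{y}\sum_{s=0}^{W_y}[\lambda_y-k_cs/\beta_y]+k_a\sum_{x,y}\sum_{s=0}^{W_{xy}}s$.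
   Context: $\mathcal X$ is a finite set of units, $\mathcal G=(\mathcal X,\mathcal E)$ a directed graph, $N_x=\{y:(x,y)\in\mathcal E\}$, $\alpha_x,\beta_x$ non-negative integers. A partial allocation state is a matrix $W\in\mathbb N^{\mathcal X\times\mathcal X}$ with $W_{xy}=0$ whenever $(x,y)\notin\mathcal E$, $W^x:=\sum_yW_{xy}\le\alpha_x$, $W_y:=\sum_xW_{xy}\le\beta_y$; it is an allocation state if $W^x=\alpha_x$ for all $x$; $\mathcal W_p,\mathcal W$ denote these sets; $e_{xy}$ is the matrix unit. Fix reals $\lambda_y$, $k_c,k_a\ge0$, $\gamma>0$, and let $f_{xy}(W)=\lambda_y-k_cW_y/\beta_y+k_aW_{xy}$ (in $\Psi$ the $s=0$ term contributes $\lambda_y$). Let $\mathcal X^x(W)=\{y\in N_x:W_y<\beta_y\}$ and $p_y(W,x)=e^{\gamma f_{xy}(W+e_{xy})}/\sum_{y'\in\mathcal X^x(W)}e^{\gamma f_{xy'}(W+e_{xy'})}$. Let $P_{\rm all}(W,x),P_{\rm dis}(W,x)\ge0$ with sum $1$, $P_{\rm all}(W,x)=0$ if $W^x=\alpha_x$, $P_{\rm dis}(W,x)=0$ if $W^x=0$. $W(t)$ is the continuous-time Markov process on $\mathcal W_p$ in which each unit $x$ activates at the times of an independent Poisson clock of rate $\nu_x$, where (standing assumption of the paper) $\nu_x=\nu\alpha_x$ for some $\nu>0$; upon activation in state $W$, with probability $P_{\rm all}(W,x)$ unit $x$ chooses $y^*\in\mathcal X^x(W)$ with probability $p_{y^*}(W,x)$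 and the state becomes $W+e_{xy^*}$ (nothing happens if $\mathcal X^x(W)=\emptyset$); with probability $P_{\rm dis}(W,x)$ it chooses $\bar y$ with probability $W_{x\bar y}/W^x$, then $y^*\in\mathcal X^x(W-e_{x\bar y})$ with probability $p_{y^*}(W-e_{x\bar y},x)$, and the state becomes $W-e_{x\bar y}+e_{xy^*}$. From an allocation state only distribution moves occur, so $\mathcal W$ is closed under the dynamics. *)

theory Defs
  imports Main Complex_Main
begin

type_synonym 'a mat = "'a \<Rightarrow> 'a \<Rightarrow> nat"

definition eunit :: "'a \<Rightarrow> 'a \<Rightarrow> 'a mat" where
  "eunit x y = (\<lambda>a b. if a = x \<and> b = y then 1 else 0)"

definition madd :: "'a mat \<Rightarrow> 'a mat \<Rightarrow> 'a mat" where
  "madd W V = (\<lambda>a b. W a b + V a b)"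

definition msub :: "'a mat \<Rightarrow> 'a mat \<Rightarrow> 'a mat" where
  "msub W V = (\<lambda>a b. W a b - V a b)"

definition nbhd :: "('a \<times> 'a) set \<Rightarrow> 'a \<Rightarrow> 'a set" where
  "nbhd E x = {y. (x, y) \<in> E}"

definition nbhd_set :: "('a \<times> 'a) set \<Rightarrow> 'a set \<Rightarrow> 'a set" where
  "nbhd_set E A = (\<Union>x\<in>A. nbhd E x)"

definition rowsum :: "'a set \<Rightarrow> 'a mat \<Rightarrow> 'a \<Rightarrow> nat" where
  "rowsum X W x = (\<Sum>y\<in>X. W x y)"

definition colsum :: "'a set \<Rightarrow> 'a mat \<Rightarrow> 'a \<Rightarrow> nat" where
  "colsum X W y = (\<Sum>x\<in>X. W x y)"

definition partial_states ::
  "'a set \<Rightarrow> ('a \<times> 'a) set \<Rightarrow> ('a \<Rightarrow> nat) \<Rightarrow> ('a \<Rightarrow> nat) \<Rightarrow> 'a mat set" where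
  "partial_states X E \<alpha> \<beta> =
     {W. (\<forall>x y. (x, y) \<notin> E \<longrightarrow> W x y = 0)
        \<and> (\<forall>x\<in>X. rowsum X W x \<le> \<alpha> x)
        \<and> (\<forall>y\<in>X. colsum X W y \<le> \<beta> y)}"

definition alloc_states ::
  "'a set \<Rightarrow> ('a \<times> 'a) set \<Rightarrow> ('a \<Rightarrow> nat) \<Rightarrow> ('a \<Rightarrow> nat) \<Rightarrow> 'a mat set" where
  "alloc_states X E \<alpha> \<beta> =
     {W \<in> partial_states X E \<alpha> \<beta>. \<forall>x\<in>X. rowsum X W x = \<alpha> x}"

definition avail ::
  "'a set \<Rightarrow> ('a \<times> 'a) set \<Rightarrow> ('a \<Rightarrow> nat) \<Rightarrow> 'a mat \<Rightarrow> 'a \<Rightarrow> 'a set" where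
  "avail X E \<beta> W x = {y \<in> nbhd E x. colsum X W y < \<beta> y}"

definition fval ::
  "'a set \<Rightarrow> ('a \<Rightarrow> nat) \<Rightarrow> ('a \<Rightarrow> real) \<Rightarrow> real \<Rightarrow> real \<Rightarrow> 'a \<Rightarrow> 'a \<Rightarrow> 'a mat \<Rightarrow> real" where
  "fval X \<beta> lam kc ka x y W =
     lam y - kc * real (colsum X W y) / real (\<beta> y) + ka * real (W x y)"

definition pchoice ::
  "'a set \<Rightarrow> ('a \<times> 'a) set \<Rightarrow> ('a \<Rightarrow> nat) \<Rightarrow> ('a \<Rightarrow> real) \<Rightarrow> real \<Rightarrow> real \<Rightarrow> real
    \<Rightarrow> 'a mat \<Rightarrow> 'a \<Rightarrow> 'a \<Rightarrow> real" where
  "pchoice X E \<beta> lam kc ka \<gamma> W x y =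
     exp (\<gamma> * fval X \<beta> lam kc ka x y (madd W (eunit x y))) /
     (\<Sum>y'\<in>avail X E \<beta> W x. exp (\<gamma> * fval X \<beta> lam kc ka x y' (madd W (eunit x y'))))"

text \<open>Transition rate q(W, W') of the continuous-time Markov process W(t):
unit x activates at rate nu * alpha_x; it then performs an allocation move
(probability P_all) or a distribution move (probability P_dis), as described.
Only meaningful for W' different from W.\<close>
definition rate ::
  "'a set \<Rightarrow> ('a \<times> 'a) set \<Rightarrow> ('a \<Rightarrow> nat) \<Rightarrow> ('a \<Rightarrow> nat) \<Rightarrow> ('a \<Rightarrow> real) \<Rightarrow> real \<Rightarrow> real
    \<Rightarrow> real \<Rightarrow> real \<Rightarrow> ('a mat \<Rightarrow> 'a \<Rightarrow> real) \<Rightarrow> ('a mat \<Rightarrow> 'a \<Rightarrow> real)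
    \<Rightarrow> 'a mat \<Rightarrow> 'a mat \<Rightarrow> real" where
  "rate X E \<alpha> \<beta> lam kc ka \<gamma> \<nu> Pall Pdis W W' =
     (\<Sum>x\<in>X. \<nu> * real (\<alpha> x) *
        ( Pall W x *
            (\<Sum>ys\<in>avail X E \<beta> W x.
               (if madd W (eunit x ys) = W' then pchoice X E \<beta> lam kc ka \<gamma> W x ys else 0))
        + Pdis W x *
            (\<Sum>yb\<in>X. (real (W x yb) / real (rowsum X W x)) *
               (\<Sum>ys\<in>avail X E \<beta> (msub W (eunit x yb)) x.
                  (if madd (msub W (eunit x yb)) (eunit x ys) = W'
                   then pchoice X E \<beta> lam kc ka \<gamma> (msub W (eunit x yb)) x ys else 0)))))"

definition Psi ::
  "'a set \<Rightarrow> ('a \<Rightarrow> nat) \<Rightarrow> ('a \<Rightarrow> real) \<Rightarrow> real \<Rightarrow> real \<Rightarrow> 'a mat \<Rightarrow> real" where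
  "Psi X \<beta> lam kc ka W =
     (\<Sum>y\<in>X. \<Sum>s=0..colsum X W y. lam y - kc * real s / real (\<beta> y))
     + ka * (\<Sum>x\<in>X. \<Sum>y\<in>X. \<Sum>s=0..W x y. real s)"

definition multinom :: "'a set \<Rightarrow> ('a \<Rightarrow> nat) \<Rightarrow> 'a mat \<Rightarrow> real" where
  "multinom X \<alpha> W =
     (\<Prod>x\<in>X. fact (\<alpha> x)) / (\<Prod>x\<in>X. \<Prod>y\<in>X. fact (W x y))"

definition mu ::
  "'a set \<Rightarrow> ('a \<times> 'a) set \<Rightarrow> ('a \<Rightarrow> nat) \<Rightarrow> ('a \<Rightarrow> nat) \<Rightarrow> ('a \<Rightarrow> real) \<Rightarrow> real \<Rightarrow> real
    \<Rightarrow> real \<Rightarrow> 'a mat \<Rightarrow> real" where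
  "mu X E \<alpha> \<beta> lam kc ka \<gamma> W =
     multinom X \<alpha> W * exp (\<gamma> * Psi X \<beta> lam kc ka W) /
     (\<Sum>W'\<in>alloc_states X E \<alpha> \<beta>. multinom X \<alpha> W' * exp (\<gamma> * Psi X \<beta> lam kc ka W'))"

text \<open>Irreducibility (ergodicity, for a finite state space) of a CTMC with
rates q restricted to the state set S.\<close>
definition irreducible_on :: "'s set \<Rightarrow> ('s \<Rightarrow> 's \<Rightarrow> real) \<Rightarrow> bool" where
  "irreducible_on S q \<longleftrightarrow>
     (\<forall>a\<in>S. \<forall>b\<in>S. (a, b) \<in> {(u, v). u \<in> S \<and> v \<in> S \<and> u \<noteq> v \<and> q u v > 0}\<^sup>*)"

definition reversible_on :: "'s set \<Rightarrow> ('s \<Rightarrow> 's \<Rightarrow> real) \<Rightarrow> ('s \<Rightarrow> real) \<Rightarrow> bool" where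
  "reversible_on S q \<pi> \<longleftrightarrow> (\<forall>a\<in>S. \<forall>b\<in>S. \<pi> a * q a b = \<pi> b * q b a)"

definition invariant_prob_on :: "'s set \<Rightarrow> ('s \<Rightarrow> 's \<Rightarrow> real) \<Rightarrow> ('s \<Rightarrow> real) \<Rightarrow> bool" where
  "invariant_prob_on S q \<pi> \<longleftrightarrow>
     (\<forall>a\<in>S. \<pi> a \<ge> 0) \<and> (\<Sum>a\<in>S. \<pi> a) = 1 \<and>
     (\<forall>b\<in>S. (\<Sum>a\<in>S - {b}. \<pi> a * q a b) = \<pi> b * (\<Sum>c\<in>S - {b}. q b c))"

end

theory Submission
  imports Defs
begin

definition mv :: "'a mat \<Rightarrow> 'a \<Rightarrow> 'a \<Rightarrow> 'a \<Rightarrow> 'a mat" where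
  "mv W x a z = madd (msub W (eunit x a)) (eunit x z)"

lemma sum_if_eq1[simp]: "finite A \<Longrightarrow> (\<Sum>v\<in>A. if P \<and> v = z then (c::'b::comm_monoid_add) else 0) = (if P \<and> z \<in> A then c else 0)"
  by (cases P) auto
lemma sum_if_eq2[simp]: "finite A \<Longrightarrow> (\<Sum>u\<in>A. if u = x \<and> Q then (c::'b::comm_monoid_add) else 0) = (if x \<in> A \<and> Q then c else 0)"
  by (cases Q) auto

lemma mv_int: "W x a > 0 \<Longrightarrow> int (mv W x a z u v) = int (W u v) - (if u = x \<and> v = a then 1 else 0) + (if u = x \<and> v = z then 1 else 0)"
  by (auto simp: mv_def madd_def msub_def eunit_def)

lemma madd_int: "int (madd W (eunit x z) u v) = int (W u v) + (if u = x \<and> v = z then 1 else 0)"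
  by (auto simp: madd_def eunit_def)

lemma colsum_mv: "finite X \<Longrightarrow> x \<in> X \<Longrightarrow> W x a > 0 \<Longrightarrow>
  int (colsum X (mv W x a z) v) = int (colsum X W v) - (if v = a then 1 else 0) + (if v = z then 1 else 0)"
  by (simp add: colsum_def of_nat_sum mv_int sum.distrib sum_subtractf)

lemma rowsum_mv: "finite X \<Longrightarrow> a \<in> X \<Longrightarrow> z \<in> X \<Longrightarrow> W x a > 0 \<Longrightarrow>
  rowsum X (mv W x a z) u = rowsum X W u"
proof -
  assume a: "finite X" "a \<in> X" "z \<in> X" "W x a > 0"
  have "int (rowsum X (mv W x a z) u) = int (rowsum X W u)"
    using a by (simp add: rowsum_def of_nat_sum mv_int sum.distrib sum_subtractf)
  then show ?thesis by simp
qed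

lemma colsum_madd: "finite X \<Longrightarrow> x \<in> X \<Longrightarrow> colsum X (madd W (eunit x z)) v = colsum X W v + (if v = z then 1 else 0)"
proof -
  assume a: "finite X" "x \<in> X"
  have "int (colsum X (madd W (eunit x z)) v) = int (colsum X W v) + (if v = z then 1 else 0)"
    using a by (simp add: colsum_def of_nat_sum madd_int sum.distrib)
  then show ?thesis by (cases "v = z") simp_all
qed

lemma rowsum_madd: "finite X \<Longrightarrow> z \<in> X \<Longrightarrow> rowsum X (madd W (eunit x z)) u = rowsum X W u + (if u = x then 1 else 0)"
proof -
  assume a: "finite X" "z \<in> X"
  have "int (rowsum X (madd W (eunit x z)) u) = int (rowsum X W u) + (if u = x then 1 else 0)"
    using a by (simp add: rowsum_def of_nat_sum madd_int sum.distrib)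
  then show ?thesis by (cases "u = x") simp_all
qed


definition dd :: "'a set \<Rightarrow> 'a mat \<Rightarrow> 'a mat \<Rightarrow> int" where
  "dd X W W' = (\<Sum>u\<in>X. \<Sum>v\<in>X. \<bar>int (W u v) - int (W' u v)\<bar>)"

definition Mmin :: "'a mat \<Rightarrow> 'a mat \<Rightarrow> 'a mat" where
  "Mmin W W' = (\<lambda>u v. min (W u v) (W' u v))"

definition Uset :: "'a set \<Rightarrow> 'a mat \<Rightarrow> 'a mat \<Rightarrow> 'a set" where
  "Uset X W W' = {x \<in> X. \<exists>v\<in>X. W x v \<noteq> W' x v}"

lemma sum_update:
  assumes "finite A" "a \<in> A" "f' a = f a + c" "\<And>b. b \<in> A \<Longrightarrow> b \<noteq> a \<Longrightarrow> f' b = f b"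
  shows "sum f' A = sum f A + (c::'b::comm_monoid_add)"
proof -
  have "sum f' A = f' a + sum f' (A - {a})" using assms(1,2) by (rule sum.remove)
  also have "sum f' (A - {a}) = sum f (A - {a})" using assms(4) by (intro sum.cong) auto
  also have "sum f A = f a + sum f (A - {a})" using assms(1,2) by (rule sum.remove)
  ultimately show ?thesis using assms(3) by (simp add: ac_simps)
qed

lemma prod_update:
  assumes "finite A" "a \<in> A" "f' a = f a * c" "\<And>b. b \<in> A \<Longrightarrow> b \<noteq> a \<Longrightarrow> f' b = f b"
  shows "prod f' A = prod f A * (c::'b::comm_monoid_mult)"
proof -
  have "prod f' A = f' a * prod f' (A - {a})" using assms(1,2) by (rule prod.remove)
  also have "prod f' (A - {a}) = prod f (A - {a})" using assms(4) by (intro prod.cong) auto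
  also have "prod f A = f a * prod f (A - {a})" using assms(1,2) by (rule prod.remove)
  ultimately show ?thesis using assms(3) by (simp add: ac_simps)
qed

lemma madd_eunit_apply: "madd V (eunit x y) u v = V u v + (if u = x \<and> v = y then 1 else 0)"
  by (simp add: madd_def eunit_def)

lemma multinom_madd:
  assumes fin: "finite X" and x: "x \<in> X" and y: "y \<in> X"
  shows "multinom X \<alpha> (madd V (eunit x y)) * real (Suc (V x y)) = multinom X \<alpha> V"
proof -
  let ?Q = "\<lambda>W. (\<Prod>u\<in>X. \<Prod>v\<in>X. (fact (W u v) :: real))"
  have row: "(\<Prod>v\<in>X. (fact (madd V (eunit x y) x v) :: real)) = (\<Prod>v\<in>X. fact (V x v)) * real (Suc (V x y))"
    by (rule prod_update[OF fin y]) (auto simp: madd_eunit_apply fact_Suc)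
  have Q: "?Q (madd V (eunit x y)) = ?Q V * real (Suc (V x y))"
    by (rule prod_update[OF fin x]) (simp add: row, simp add: madd_eunit_apply)
  have Qpos: "?Q V > 0" by (intro prod_pos) auto
  show ?thesis unfolding multinom_def Q using Qpos by simp
qed

lemma Psi_madd:
  assumes fin: "finite X" and x: "x \<in> X" and y: "y \<in> X"
  shows "Psi X \<beta> lam kc ka (madd V (eunit x y)) = Psi X \<beta> lam kc ka V + fval X \<beta> lam kc ka x y (madd V (eunit x y))"
proof -
  have cs: "colsum X (madd V (eunit x y)) v = colsum X V v + (if v = y then 1 else 0)" for v
    by (rule colsum_madd[OF fin x])
  have S1: "(\<Sum>v\<in>X. \<Sum>s=0..colsum X (madd V (eunit x y)) v. lam v - kc * real s / real (\<beta> v))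
      = (\<Sum>v\<in>X. \<Sum>s=0..colsum X V v. lam v - kc * real s / real (\<beta> v))
        + (lam y - kc * real (Suc (colsum X V y)) / real (\<beta> y))"
    by (rule sum_update[OF fin y]) (auto simp: cs)
  have row: "(\<Sum>v\<in>X. \<Sum>s=0..madd V (eunit x y) x v. real s) = (\<Sum>v\<in>X. \<Sum>s=0..V x v. real s) + real (Suc (V x y))"
    by (rule sum_update[OF fin y]) (auto simp: madd_eunit_apply)
  have S2: "(\<Sum>u\<in>X. \<Sum>v\<in>X. \<Sum>s=0..madd V (eunit x y) u v. real s) = (\<Sum>u\<in>X. \<Sum>v\<in>X. \<Sum>s=0..V u v. real s) + real (Suc (V x y))"
    by (rule sum_update[OF fin x]) (simp add: row, simp add: madd_eunit_apply)
  show ?thesis unfolding Psi_def fval_def S1 S2 using cs[of y]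
    by (simp add: madd_eunit_apply algebra_simps)
qed

definition Fm :: "'a set \<Rightarrow> ('a \<Rightarrow> nat) \<Rightarrow> ('a \<Rightarrow> nat) \<Rightarrow> ('a \<Rightarrow> real) \<Rightarrow> real \<Rightarrow> real \<Rightarrow> real \<Rightarrow> 'a mat \<Rightarrow> real" where
  "Fm X \<alpha> \<beta> lam kc ka \<gamma> W = multinom X \<alpha> W * exp (\<gamma> * Psi X \<beta> lam kc ka W)"

lemma Fm_madd:
  assumes fin: "finite X" and x: "x \<in> X" and y: "y \<in> X"
  shows "Fm X \<alpha> \<beta> lam kc ka \<gamma> (madd V (eunit x y)) * real (madd V (eunit x y) x y)
       = Fm X \<alpha> \<beta> lam kc ka \<gamma> V * exp (\<gamma> * fval X \<beta> lam kc ka x y (madd V (eunit x y)))"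
proof -
  have e: "real (madd V (eunit x y) x y) = real (Suc (V x y))" by (simp add: madd_eunit_apply)
  show ?thesis
    unfolding Fm_def e Psi_madd[OF assms] distrib_left exp_add
    using multinom_madd[OF assms, of \<alpha> V] by (simp add: ac_simps)
qed

lemma Fm_pos: "Fm X \<alpha> \<beta> lam kc ka \<gamma> W > 0"
  unfolding Fm_def multinom_def by (intro mult_pos_pos divide_pos_pos prod_pos) auto


fun Gs :: "'a set \<Rightarrow> ('a \<times> 'a) set \<Rightarrow> 'a mat \<Rightarrow> 'a set \<Rightarrow> nat \<Rightarrow> 'a set" where
  "Gs X E M S0 0 = S0"
| "Gs X E M S0 (Suc n) = Gs X E M S0 n \<union> {z. \<exists>u\<in>X. \<exists>z'\<in>Gs X E M S0 n. M u z' > 0 \<and> (u, z) \<in> E}"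

lemma Gs_mono: "m \<le> n \<Longrightarrow> Gs X E M S0 m \<subseteq> Gs X E M S0 n"
  by (induction n rule: dec_induct) auto

lemma Gs_change:
  assumes "\<And>u v. (u, v) \<noteq> (xo, zo) \<Longrightarrow> M u v > 0 \<Longrightarrow> M1 u v > 0"
    and "\<And>m. m < n \<Longrightarrow> zo \<notin> Gs X E M S0 m"
  shows "k \<le> n \<Longrightarrow> Gs X E M S0 k \<subseteq> Gs X E M1 S0 k"
proof (induction k)
  case 0 then show ?case by simp
next
  case (Suc k)
  have IH: "Gs X E M S0 k \<subseteq> Gs X E M1 S0 k" using Suc by simp
  show ?case
  proof
    fix z assume "z \<in> Gs X E M S0 (Suc k)"
    then consider "z \<in> Gs X E M S0 k" | u z' where "u \<in> X" "z' \<in> Gs X E M S0 k" "M u z' > 0" "(u, z) \<in> E"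
      by auto
    then show "z \<in> Gs X E M1 S0 (Suc k)"
    proof cases
      case 1 then show ?thesis using IH by auto
    next
      case 2
      have "(u, z') \<noteq> (xo, zo)" using 2 assms(2)[of k] Suc.prems by auto
      then have "M1 u z' > 0" using assms(1) 2 by blast
      then show ?thesis using 2 IH by auto
    qed
  qed
qed

lemma Gs_sub: "S0 \<subseteq> X \<Longrightarrow> E \<subseteq> X \<times> X \<Longrightarrow> Gs X E M S0 n \<subseteq> X"
  by (induction n) auto

definition tot :: "'a set \<Rightarrow> 'a mat \<Rightarrow> nat" where
  "tot X W = (\<Sum>x\<in>X. rowsum X W x)"

locale setting =
  fixes X :: "'a set" and E :: "('a \<times> 'a) set" and \<alpha> \<beta> :: "'a \<Rightarrow> nat"
  assumes fin: "finite X" and edges: "E \<subseteq> X \<times> X"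
    and hall: "\<And>A. A \<subseteq> X \<Longrightarrow> A \<noteq> {} \<Longrightarrow> (\<Sum>x\<in>A. \<alpha> x) < (\<Sum>y\<in>nbhd_set E A. \<beta> y)"
begin

abbreviation "PS \<equiv> partial_states X E \<alpha> \<beta>"
abbreviation "AS \<equiv> alloc_states X E \<alpha> \<beta>"

lemma E_X: "(x, y) \<in> E \<Longrightarrow> x \<in> X \<and> y \<in> X"
  using edges by auto

lemma ps_E: "W \<in> PS \<Longrightarrow> (x, y) \<notin> E \<Longrightarrow> W x y = 0"
  by (auto simp: partial_states_def)

lemma ps_pos_E: "W \<in> PS \<Longrightarrow> W x y > 0 \<Longrightarrow> (x, y) \<in> E"
  using ps_E by fastforce

lemma ps_row: "W \<in> PS \<Longrightarrow> x \<in> X \<Longrightarrow> rowsum X W x \<le> \<alpha> x"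
  by (auto simp: partial_states_def)

lemma ps_col: "W \<in> PS \<Longrightarrow> y \<in> X \<Longrightarrow> colsum X W y \<le> \<beta> y"
  by (auto simp: partial_states_def)

lemma as_ps: "W \<in> AS \<Longrightarrow> W \<in> PS"
  by (auto simp: alloc_states_def)

lemma as_row: "W \<in> AS \<Longrightarrow> x \<in> X \<Longrightarrow> rowsum X W x = \<alpha> x"
  by (auto simp: alloc_states_def)

lemma le_rowsum: "y \<in> X \<Longrightarrow> W x y \<le> rowsum X W x"
  unfolding rowsum_def by (rule member_le_sum) (use fin in auto)

lemma le_colsum: "x \<in> X \<Longrightarrow> W x y \<le> colsum X W y"
  unfolding colsum_def by (rule member_le_sum) (use fin in auto)

lemma nbhd_X: "nbhd E x \<subseteq> X"
  using edges by (auto simp: nbhd_def)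

lemma mv_ps:
  assumes W: "W \<in> PS" and x: "x \<in> X" and a: "a \<in> X" and pos: "W x a > 0"
    and e: "(x, z) \<in> E" and h: "colsum X W z < \<beta> z"
  shows "mv W x a z \<in> PS"
proof -
  have z: "z \<in> X" using e E_X by blast
  have xa: "(x, a) \<in> E" using ps_pos_E[OF W pos] .
  have 1: "mv W x a z u v = 0" if "(u, v) \<notin> E" for u v
  proof -
    have "int (mv W x a z u v) = int (W u v) - (if u = x \<and> v = a then 1 else 0) + (if u = x \<and> v = z then 1 else 0)"
      using mv_int[of W x a z u v] pos by simp
    then show ?thesis using that ps_E[OF W that] xa e by (auto split: if_splits)
  qed
  have 2: "rowsum X (mv W x a z) u \<le> \<alpha> u" if "u \<in> X" for u
    using rowsum_mv[of X a z W x u] fin a z pos ps_row[OF W that] by simp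
  have 3: "colsum X (mv W x a z) v \<le> \<beta> v" if "v \<in> X" for v
  proof -
    have "int (colsum X (mv W x a z) v) = int (colsum X W v) - (if v = a then 1 else 0) + (if v = z then 1 else 0)"
      using colsum_mv[of X x W a z v] fin x pos by simp
    then show ?thesis using ps_col[OF W that] h by (auto split: if_splits)
  qed
  show ?thesis using 1 2 3 by (auto simp: partial_states_def)
qed

lemma mv_as:
  assumes W: "W \<in> AS" and x: "x \<in> X" and a: "a \<in> X" and pos: "W x a > 0"
    and e: "(x, z) \<in> E" and h: "colsum X W z < \<beta> z"
  shows "mv W x a z \<in> AS"
proof -
  have z: "z \<in> X" using e E_X by blast
  show ?thesis using mv_ps[OF as_ps[OF W] x a pos e h] rowsum_mv[of X a z W x] fin a z pos as_row[OF W]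
    by (auto simp: alloc_states_def)
qed

lemma madd_ps:
  assumes W: "W \<in> PS" and e: "(x, z) \<in> E" and r: "rowsum X W x < \<alpha> x" and h: "colsum X W z < \<beta> z"
  shows "madd W (eunit x z) \<in> PS"
proof -
  have z: "z \<in> X" and x: "x \<in> X" using e E_X by auto
  have 1: "madd W (eunit x z) u v = 0" if "(u, v) \<notin> E" for u v
    using ps_E[OF W that] e that by (auto simp: madd_def eunit_def)
  have 2: "rowsum X (madd W (eunit x z)) u \<le> \<alpha> u" if "u \<in> X" for u
    using rowsum_madd[OF fin z] ps_row[OF W that] r by auto
  have 3: "colsum X (madd W (eunit x z)) v \<le> \<beta> v" if "v \<in> X" for v
    using colsum_madd[OF fin x] ps_col[OF W that] h by auto
  show ?thesis using 1 2 3 by (auto simp: partial_states_def)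
qed

lemma count_hole:
  assumes G: "G \<subseteq> X" and A: "A \<subseteq> X" "A \<noteq> {}" and NA: "nbhd_set E A \<subseteq> G" and W: "W \<in> PS"
    and cl: "\<And>u z. u \<in> X \<Longrightarrow> z \<in> G \<Longrightarrow> W u z > 0 \<Longrightarrow> u \<in> A"
  shows "\<exists>z\<in>G. colsum X W z < \<beta> z"
proof (rule ccontr)
  assume "\<not> ?thesis"
  then have full: "\<And>z. z \<in> G \<Longrightarrow> \<beta> z \<le> colsum X W z" by force
  have fG: "finite G" using G fin finite_subset by blast
  have fA: "finite A" using A fin finite_subset by blast
  have "(\<Sum>x\<in>A. \<alpha> x) < (\<Sum>y\<in>nbhd_set E A. \<beta> y)" using hall A by blast
  also have "\<dots> \<le> (\<Sum>y\<in>G. \<beta> y)" by (rule sum_mono2[OF fG NA]) auto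
  also have "\<dots> \<le> (\<Sum>z\<in>G. colsum X W z)" using full by (rule sum_mono)
  also have "\<dots> = (\<Sum>z\<in>G. \<Sum>u\<in>A. W u z)"
  proof (rule sum.cong[OF refl])
    fix z assume z: "z \<in> G"
    show "colsum X W z = (\<Sum>u\<in>A. W u z)"
      unfolding colsum_def
      by (rule sum.mono_neutral_right[OF fin A(1)]) (use cl z in fastforce)
  qed
  also have "\<dots> = (\<Sum>u\<in>A. \<Sum>z\<in>G. W u z)" by (rule sum.swap)
  also have "\<dots> \<le> (\<Sum>u\<in>A. rowsum X W u)"
    unfolding rowsum_def by (rule sum_mono, rule sum_mono2[OF fin G]) auto
  also have "\<dots> \<le> (\<Sum>x\<in>A. \<alpha> x)" using ps_row[OF W] A by (intro sum_mono) auto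
  finally show False by simp
qed

lemma prop_alloc:
  assumes x: "x \<in> X"
  shows "\<forall>W z. W \<in> PS \<longrightarrow> rowsum X W x < \<alpha> x \<longrightarrow> z \<in> Gs X E W (nbhd E x) n \<longrightarrow>
           colsum X W z < \<beta> z \<longrightarrow> (\<exists>W2\<in>PS. tot X W < tot X W2)"
proof (induction n)
  case 0
  show ?case
  proof (intro allI impI)
    fix W z assume W: "W \<in> PS" and r: "rowsum X W x < \<alpha> x" and z: "z \<in> Gs X E W (nbhd E x) 0"
      and h: "colsum X W z < \<beta> z"
    have e: "(x, z) \<in> E" using z by (simp add: nbhd_def)
    have zX: "z \<in> X" using e E_X by blast
    let ?W2 = "madd W (eunit x z)"
    have "?W2 \<in> PS" by (rule madd_ps[OF W e r h])
    moreover have "tot X W < tot X ?W2"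
      unfolding tot_def using x by (intro sum_strict_mono_ex1[OF fin]) (auto simp: rowsum_madd[OF fin zX])
    ultimately show "\<exists>W2\<in>PS. tot X W < tot X W2" by blast
  qed
next
  case (Suc n)
  show ?case
  proof (intro allI impI)
    fix W z assume W: "W \<in> PS" and r: "rowsum X W x < \<alpha> x" and z: "z \<in> Gs X E W (nbhd E x) (Suc n)"
      and h: "colsum X W z < \<beta> z"
    show "\<exists>W2\<in>PS. tot X W < tot X W2"
    proof (cases "z \<in> Gs X E W (nbhd E x) n")
      case True show ?thesis using Suc.IH[rule_format, OF W r True h] by blast
    next
      case False
      then obtain u z' where u: "u \<in> X" and z': "z' \<in> Gs X E W (nbhd E x) n" and pos: "W u z' > 0"
        and e: "(u, z) \<in> E" using z by auto
      have z'X: "z' \<in> X" using Gs_sub[OF nbhd_X edges] z' by blast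
      have zz: "z \<noteq> z'" using False z' by blast
      let ?W1 = "mv W u z' z"
      have W1: "?W1 \<in> PS" by (rule mv_ps[OF W u z'X pos e h])
      have zX: "z \<in> X" using e E_X by blast
      have rows: "\<And>v. rowsum X ?W1 v = rowsum X W v" using rowsum_mv[of X z' z W u] fin z'X zX pos by simp
      have "int (colsum X ?W1 z') = int (colsum X W z') - 1"
        using colsum_mv[of X u W z' z z'] fin u pos zz by simp
      moreover have "W u z' \<le> colsum X W z'" by (rule le_colsum[OF u])
      ultimately have h1: "colsum X ?W1 z' < \<beta> z'" using ps_col[OF W z'X] pos by linarith
      have "Gs X E W (nbhd E x) n \<subseteq> Gs X E ?W1 (nbhd E x) n"
      proof (rule Gs_change[where xo=u and zo=z'])
        fix v w assume "(v, w) \<noteq> (u, z')" "W v w > 0"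
        then show "?W1 v w > 0" using mv_int[of W u z' z v w] pos by (auto split: if_splits)
      next
        fix m assume m: "m < n"
        show "z' \<notin> Gs X E W (nbhd E x) m"
        proof
          assume "z' \<in> Gs X E W (nbhd E x) m"
          then have "z \<in> Gs X E W (nbhd E x) (Suc m)" using u pos e by auto
          moreover have "Gs X E W (nbhd E x) (Suc m) \<subseteq> Gs X E W (nbhd E x) n" using m by (intro Gs_mono) simp
          ultimately show False using False by blast
        qed
      qed simp
      then have z'1: "z' \<in> Gs X E ?W1 (nbhd E x) n" using z' by blast
      have r1: "rowsum X ?W1 x < \<alpha> x" using rows r by simp
      obtain W2 where "W2 \<in> PS" "tot X ?W1 < tot X W2" using Suc.IH[rule_format, OF W1 r1 z'1 h1] by blast
      moreover have "tot X ?W1 = tot X W" using rows by (simp add: tot_def)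
      ultimately show ?thesis by auto
    qed
  qed
qed


lemma tot_le: "W \<in> PS \<Longrightarrow> tot X W \<le> sum \<alpha> X"
  unfolding tot_def by (rule sum_mono) (rule ps_row)

lemma zero_ps: "(\<lambda>_ _. 0) \<in> PS" by (simp add: partial_states_def rowsum_def colsum_def)
lemma exists_alloc: "\<exists>W. W \<in> AS"
proof -
  have "W \<in> PS \<Longrightarrow> \<exists>W'. W' \<in> AS" for W
  proof (induction "sum \<alpha> X - tot X W" arbitrary: W rule: less_induct)
    case less
    show ?case
    proof (cases "\<forall>x\<in>X. rowsum X W x = \<alpha> x")
      case True then show ?thesis using less.prems unfolding alloc_states_def by blast
    next
      case False
      then obtain x where x: "x \<in> X" "rowsum X W x \<noteq> \<alpha> x" by blast
      have r: "rowsum X W x < \<alpha> x" using ps_row[OF less.prems x(1)] x(2) by simp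
      define G where "G = (\<Union>n. Gs X E W (nbhd E x) n)"
      define A where "A = {u\<in>X. nbhd E u \<subseteq> G}"
      have G: "G \<subseteq> X" unfolding G_def using Gs_sub[OF nbhd_X edges] by blast
      have "nbhd E x \<subseteq> G"
      proof
        fix z assume "z \<in> nbhd E x"
        then have "z \<in> Gs X E W (nbhd E x) 0" by simp
        then show "z \<in> G" unfolding G_def by blast
      qed
      then have xA: "x \<in> A" using x(1) unfolding A_def by blast
      have NA: "nbhd_set E A \<subseteq> G" unfolding nbhd_set_def A_def by blast
      have cl: "u \<in> A" if u: "u \<in> X" and zG: "z \<in> G" and pos: "W u z > 0" for u z
      proof -
        obtain n where zn: "z \<in> Gs X E W (nbhd E x) n" using zG unfolding G_def by blast
        have "nbhd E u \<subseteq> Gs X E W (nbhd E x) (Suc n)"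
        proof
          fix y assume "y \<in> nbhd E u"
          then have "(u, y) \<in> E" by (simp add: nbhd_def)
          then show "y \<in> Gs X E W (nbhd E x) (Suc n)" using u zn pos by auto
        qed
        then show ?thesis using u unfolding A_def G_def by blast
      qed
      have AX: "A \<subseteq> X" unfolding A_def by blast
      have Ane: "A \<noteq> {}" using xA by blast
      have "\<exists>z\<in>G. colsum X W z < \<beta> z"
        by (rule count_hole[of G A W]) (fact G, fact AX, fact Ane, fact NA, fact less.prems, fact cl)
      then obtain z where zG: "z \<in> G" and h: "colsum X W z < \<beta> z" by blast
      then obtain n where zn: "z \<in> Gs X E W (nbhd E x) n" unfolding G_def by blast
      obtain W2 where W2: "W2 \<in> PS" "tot X W < tot X W2"
        using prop_alloc[OF x(1), of n] less.prems r zn h by blast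
      have "tot X W2 \<le> sum \<alpha> X" by (rule tot_le[OF W2(1)])
      then have "sum \<alpha> X - tot X W2 < sum \<alpha> X - tot X W" using W2(2) by linarith
      then show ?thesis by (rule less.hyps[OF _ W2(1)])
    qed
  qed
  moreover note zero_ps
  ultimately show ?thesis by blast
qed

definition stp where
  "stp = {(W, W2). W \<in> AS \<and> (\<exists>x a z. x \<in> X \<and> a \<in> X \<and> W x a > 0 \<and> (x, z) \<in> E \<and>
                      colsum X W z < \<beta> z \<and> W2 = mv W x a z)}"

abbreviation "reach \<equiv> (stp \<union> stp\<inverse>)\<^sup>*"

definition imp where
  "imp W W' \<longleftrightarrow> (\<exists>W2 W2'. W2 \<in> AS \<and> W2' \<in> AS \<and> (W, W2) \<in> reach \<and> (W', W2') \<in> reach \<and>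
                      dd X W2 W2' < dd X W W')"

lemma reach_sym: "(W, W') \<in> reach \<Longrightarrow> (W', W) \<in> reach"
proof -
  assume "(W, W') \<in> reach"
  then have "(W', W) \<in> ((stp \<union> stp\<inverse>)\<inverse>)\<^sup>*" by (rule rtrancl_converseI)
  moreover have "(stp \<union> stp\<inverse>)\<inverse> = stp \<union> stp\<inverse>" by auto
  ultimately show ?thesis by simp
qed

lemma mv_stp:
  assumes "W \<in> AS" "x \<in> X" "a \<in> X" "W x a > 0" "(x, z) \<in> E" "colsum X W z < \<beta> z"
  shows "(W, mv W x a z) \<in> reach"
proof -
  have "(W, mv W x a z) \<in> stp" using assms unfolding stp_def by blast
  then show ?thesis by blast
qed

lemma dd_sym: "dd X W W' = dd X W' W"
  unfolding dd_def by (intro sum.cong refl) linarith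

lemma imp_sym: "imp W' W \<Longrightarrow> imp W W'"
  unfolding imp_def using dd_sym by metis

lemma dd_less:
  assumes "\<And>u v. u \<in> X \<Longrightarrow> v \<in> X \<Longrightarrow> \<bar>int (W2 u v) - int (W2' u v)\<bar> \<le> \<bar>int (W u v) - int (W' u v)\<bar>"
    and "u0 \<in> X" "v0 \<in> X" "\<bar>int (W2 u0 v0) - int (W2' u0 v0)\<bar> < \<bar>int (W u0 v0) - int (W' u0 v0)\<bar>"
  shows "dd X W2 W2' < dd X W W'"
  unfolding dd_def
proof (rule sum_strict_mono_ex1[OF fin])
  show "\<forall>u\<in>X. (\<Sum>v\<in>X. \<bar>int (W2 u v) - int (W2' u v)\<bar>) \<le> (\<Sum>v\<in>X. \<bar>int (W u v) - int (W' u v)\<bar>)"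
    using assms(1) by (auto intro: sum_mono)
  have "(\<Sum>v\<in>X. \<bar>int (W2 u0 v) - int (W2' u0 v)\<bar>) < (\<Sum>v\<in>X. \<bar>int (W u0 v) - int (W' u0 v)\<bar>)"
    by (rule sum_strict_mono_ex1[OF fin]) (use assms in auto)
  then show "\<exists>u\<in>X. (\<Sum>v\<in>X. \<bar>int (W2 u v) - int (W2' u v)\<bar>) < (\<Sum>v\<in>X. \<bar>int (W u v) - int (W' u v)\<bar>)"
    using assms(2) by blast
qed

lemma row_exch:
  assumes W: "W \<in> AS" and W': "W' \<in> AS" and x: "x \<in> X" and v: "v \<in> X" and lt: "W x v < W' x v"
  shows "\<exists>a\<in>X. W' x a < W x a"
proof (rule ccontr)
  assume "\<not> ?thesis"
  then have "\<forall>a\<in>X. W x a \<le> W' x a" by (auto simp: not_less)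
  then have "rowsum X W x < rowsum X W' x"
    unfolding rowsum_def using v lt by (intro sum_strict_mono_ex1[OF fin]) auto
  then show False using as_row[OF W x] as_row[OF W' x] by simp
qed

lemma imp_direct:
  assumes W: "W \<in> AS" and W': "W' \<in> AS" and z: "z \<in> X" and h: "colsum X W z < \<beta> z"
    and x: "x \<in> X" and lt: "W x z < W' x z"
  shows "imp W W'"
proof -
  obtain a where a: "a \<in> X" "W' x a < W x a" using row_exch[OF W W' x z lt] by blast
  have e: "(x, z) \<in> E" using ps_pos_E[OF as_ps[OF W'], of x z] lt by simp
  have pos: "W x a > 0" using a by simp
  let ?W2 = "mv W x a z"
  have W2: "?W2 \<in> AS" by (rule mv_as[OF W x a(1) pos e h])
  have r: "(W, ?W2) \<in> reach" by (rule mv_stp[OF W x a(1) pos e h])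
  have "dd X ?W2 W' < dd X W W'"
  proof (rule dd_less)
    fix u v
    show "\<bar>int (?W2 u v) - int (W' u v)\<bar> \<le> \<bar>int (W u v) - int (W' u v)\<bar>"
      using mv_int[of W x a z u v] pos a lt by auto
  next
    show "\<bar>int (?W2 x a) - int (W' x a)\<bar> < \<bar>int (W x a) - int (W' x a)\<bar>"
      using mv_int[of W x a z x a] pos a lt by auto
  qed (use x a in auto)
  then show ?thesis unfolding imp_def using W2 W' r by blast
qed

lemma imp_double:
  assumes W: "W \<in> AS" and W': "W' \<in> AS" and h: "colsum X W z < \<beta> z" and h': "colsum X W' z < \<beta> z"
    and x: "x \<in> Uset X W W'" and e: "(x, z) \<in> E"
  shows "imp W W'"
proof -
  have xX: "x \<in> X" using x by (simp add: Uset_def)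
  obtain v where v: "v \<in> X" "W x v \<noteq> W' x v" using x by (auto simp: Uset_def)
  obtain a b where a: "a \<in> X" "W' x a < W x a" and b: "b \<in> X" "W x b < W' x b"
  proof (cases "W x v < W' x v")
    case True
    then show ?thesis using that row_exch[OF W W' xX v(1) True] v(1) by blast
  next
    case False
    then have "W' x v < W x v" using v(2) by simp
    then show ?thesis using that row_exch[OF W' W xX v(1)] v(1) by blast
  qed
  have pa: "W x a > 0" and pb: "W' x b > 0" using a b by auto
  let ?W2 = "mv W x a z" and ?W2' = "mv W' x b z"
  have W2: "?W2 \<in> AS" by (rule mv_as[OF W xX a(1) pa e h])
  have r: "(W, ?W2) \<in> reach" by (rule mv_stp[OF W xX a(1) pa e h])
  have W2': "?W2' \<in> AS" by (rule mv_as[OF W' xX b(1) pb e h'])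
  have r': "(W', ?W2') \<in> reach" by (rule mv_stp[OF W' xX b(1) pb e h'])
  have ab: "a \<noteq> b" using a b by auto
  have "dd X ?W2 ?W2' < dd X W W'"
  proof (rule dd_less)
    fix u v
    show "\<bar>int (?W2 u v) - int (?W2' u v)\<bar> \<le> \<bar>int (W u v) - int (W' u v)\<bar>"
      using mv_int[of W x a z u v] mv_int[of W' x b z u v] pa pb a b ab by auto
  next
    show "\<bar>int (?W2 x a) - int (?W2' x a)\<bar> < \<bar>int (W x a) - int (W' x a)\<bar>"
      using mv_int[of W x a z x a] mv_int[of W' x b z x a] pa pb a b ab by auto
  qed (use xX a in auto)
  then show ?thesis unfolding imp_def using W2 W2' r r' by blast
qed


lemma nbhd_set_X: "nbhd_set E A \<subseteq> X"
  using edges by (auto simp: nbhd_set_def nbhd_def)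

lemma prop_conn:
  "\<forall>W W' z. W \<in> AS \<longrightarrow> W' \<in> AS \<longrightarrow> Uset X W W' = U0 \<longrightarrow>
     z \<in> Gs X E (Mmin W W') (nbhd_set E U0) n \<longrightarrow> colsum X W z < \<beta> z \<longrightarrow> colsum X W' z < \<beta> z \<longrightarrow>
     imp W W'"
proof (induction n)
  case 0
  show ?case
  proof (intro allI impI)
    fix W W' z assume W: "W \<in> AS" and W': "W' \<in> AS" and U: "Uset X W W' = U0"
      and z: "z \<in> Gs X E (Mmin W W') (nbhd_set E U0) 0" and h: "colsum X W z < \<beta> z"
      and h': "colsum X W' z < \<beta> z"
    obtain x where x: "x \<in> U0" "(x, z) \<in> E" using z by (auto simp: nbhd_set_def nbhd_def)
    show "imp W W'" by (rule imp_double[OF W W' h h' _ x(2)]) (use x U in simp)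
  qed
next
  case (Suc n)
  show ?case
  proof (intro allI impI)
    fix W W' z assume W: "W \<in> AS" and W': "W' \<in> AS" and U: "Uset X W W' = U0"
      and z: "z \<in> Gs X E (Mmin W W') (nbhd_set E U0) (Suc n)" and h: "colsum X W z < \<beta> z"
      and h': "colsum X W' z < \<beta> z"
    show "imp W W'"
    proof (cases "z \<in> Gs X E (Mmin W W') (nbhd_set E U0) n")
      case True show ?thesis using Suc.IH W W' U True h h' by blast
    next
      case False
      then obtain u z' where u: "u \<in> X" and z': "z' \<in> Gs X E (Mmin W W') (nbhd_set E U0) n"
        and posM: "Mmin W W' u z' > 0" and e: "(u, z) \<in> E" using z by auto
      have pos: "W u z' > 0" and pos': "W' u z' > 0" using posM by (auto simp: Mmin_def)
      have z'X: "z' \<in> X" using Gs_sub[OF nbhd_set_X edges] z' by blast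
      have zz: "z \<noteq> z'" using False z' by blast
      define W1 where "W1 = mv W u z' z"
      define W1' where "W1' = mv W' u z' z"
      have W1: "W1 \<in> AS" unfolding W1_def by (rule mv_as[OF W u z'X pos e h])
      have r: "(W, W1) \<in> reach" unfolding W1_def by (rule mv_stp[OF W u z'X pos e h])
      have W1': "W1' \<in> AS" unfolding W1'_def by (rule mv_as[OF W' u z'X pos' e h'])
      have r': "(W', W1') \<in> reach" unfolding W1'_def by (rule mv_stp[OF W' u z'X pos' e h'])
      have D: "int (W1 v w) - int (W1' v w) = int (W v w) - int (W' v w)" for v w
        using mv_int[of W u z' z v w] mv_int[of W' u z' z v w] pos pos' unfolding W1_def W1'_def by simp
      have D2: "W1 v w \<noteq> W1' v w \<longleftrightarrow> W v w \<noteq> W' v w" for v w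
        using D[of v w] by linarith
      have U1: "Uset X W1 W1' = U0" using U D2 unfolding Uset_def by simp
      have dd1: "dd X W1 W1' = dd X W W'" unfolding dd_def using D by simp
      have hole: "colsum X (mv V u z' z) z' < \<beta> z'" if V: "V \<in> AS" "V u z' > 0" for V
      proof -
        have "int (colsum X (mv V u z' z) z') = int (colsum X V z') - 1"
          using colsum_mv[of X u V z' z z'] fin u V(2) zz by simp
        moreover have "V u z' \<le> colsum X V z'" by (rule le_colsum[OF u])
        ultimately have "colsum X (mv V u z' z) z' < colsum X V z'" by linarith
        moreover have "colsum X V z' \<le> \<beta> z'" by (rule ps_col[OF as_ps[OF V(1)] z'X])
        ultimately show ?thesis by linarith
      qed
      have h1: "colsum X W1 z' < \<beta> z'" and h1': "colsum X W1' z' < \<beta> z'"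
        unfolding W1_def W1'_def using hole[OF W pos] hole[OF W' pos'] by auto
      have "Gs X E (Mmin W W') (nbhd_set E U0) n \<subseteq> Gs X E (Mmin W1 W1') (nbhd_set E U0) n"
      proof (rule Gs_change[where xo=u and zo=z'])
        fix v w assume "(v, w) \<noteq> (u, z')" "Mmin W W' v w > 0"
        then show "Mmin W1 W1' v w > 0"
          using mv_int[of W u z' z v w] mv_int[of W' u z' z v w] pos pos'
          unfolding W1_def W1'_def Mmin_def by (auto split: if_splits)
      next
        fix m assume m: "m < n"
        show "z' \<notin> Gs X E (Mmin W W') (nbhd_set E U0) m"
        proof
          assume "z' \<in> Gs X E (Mmin W W') (nbhd_set E U0) m"
          then have "z \<in> Gs X E (Mmin W W') (nbhd_set E U0) (Suc m)" using u posM e by auto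
          moreover have "Gs X E (Mmin W W') (nbhd_set E U0) (Suc m) \<subseteq> Gs X E (Mmin W W') (nbhd_set E U0) n"
            using m by (intro Gs_mono) simp
          ultimately show False using False by blast
        qed
      qed simp
      then have z'1: "z' \<in> Gs X E (Mmin W1 W1') (nbhd_set E U0) n" using z' by blast
      have "imp W1 W1'" using Suc.IH W1 W1' U1 z'1 h1 h1' by blast
      then obtain W2 W2' where W2: "W2 \<in> AS" "W2' \<in> AS" "(W1, W2) \<in> reach" "(W1', W2') \<in> reach"
        "dd X W2 W2' < dd X W1 W1'" unfolding imp_def by blast
      have "(W, W2) \<in> reach" using r W2(3) by (rule rtrancl_trans)
      moreover have "(W', W2') \<in> reach" using r' W2(4) by (rule rtrancl_trans)
      ultimately show ?thesis unfolding imp_def using W2 dd1 by auto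
    qed
  qed
qed


lemma as_outside: "W \<in> AS \<Longrightarrow> W u v \<noteq> 0 \<Longrightarrow> u \<in> X \<and> v \<in> X"
  using ps_pos_E[OF as_ps] E_X by blast

lemma conn_imp:
  assumes W: "W \<in> AS" and W': "W' \<in> AS" and ne: "W \<noteq> W'"
  shows "imp W W'"
proof -
  define U0 where "U0 = Uset X W W'"
  obtain u v where uv: "W u v \<noteq> W' u v" using ne by (meson ext)
  have uvX: "u \<in> X \<and> v \<in> X" using uv as_outside[OF W, of u v] as_outside[OF W', of u v] by (cases "W u v = 0") auto
  have uU: "u \<in> U0" unfolding U0_def Uset_def using uv uvX by blast
  define M where "M = Mmin W W'"
  define G where "G = (\<Union>n. Gs X E M (nbhd_set E U0) n)"
  define A where "A = {x\<in>X. nbhd E x \<subseteq> G}"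
  have G: "G \<subseteq> X" unfolding G_def using Gs_sub[OF nbhd_set_X edges] by blast
  have U0A: "U0 \<subseteq> A"
  proof
    fix x assume x: "x \<in> U0"
    have "nbhd E x \<subseteq> Gs X E M (nbhd_set E U0) 0" using x by (auto simp: nbhd_set_def)
    then have "nbhd E x \<subseteq> G" unfolding G_def by blast
    moreover have "x \<in> X" using x unfolding U0_def Uset_def by blast
    ultimately show "x \<in> A" unfolding A_def by blast
  qed
  have AX: "A \<subseteq> X" unfolding A_def by blast
  have Ane: "A \<noteq> {}" using uU U0A by blast
  have NA: "nbhd_set E A \<subseteq> G" unfolding nbhd_set_def A_def by blast
  have cl: "x \<in> A" if x: "x \<in> X" and zG: "z \<in> G" and pos: "W x z > 0" for x z
  proof (cases "x \<in> U0")
    case True then show ?thesis using U0A by blast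
  next
    case False
    have zX: "z \<in> X" using zG G by blast
    have "W' x z = W x z" using False x zX unfolding U0_def Uset_def by auto
    then have pM: "M x z > 0" using pos unfolding M_def Mmin_def by simp
    obtain n where zn: "z \<in> Gs X E M (nbhd_set E U0) n" using zG unfolding G_def by blast
    have "nbhd E x \<subseteq> Gs X E M (nbhd_set E U0) (Suc n)"
    proof
      fix y assume "y \<in> nbhd E x"
      then have "(x, y) \<in> E" by (simp add: nbhd_def)
      then show "y \<in> Gs X E M (nbhd_set E U0) (Suc n)" using x zn pM by auto
    qed
    then show ?thesis using x unfolding A_def G_def by blast
  qed
  have "\<exists>z\<in>G. colsum X W z < \<beta> z"
    by (rule count_hole[of G A W]) (fact G, fact AX, fact Ane, fact NA, fact as_ps[OF W], fact cl)
  then obtain z where zG: "z \<in> G" and h: "colsum X W z < \<beta> z" by blast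
  have zX: "z \<in> X" using zG G by blast
  show ?thesis
  proof (cases "colsum X W' z < \<beta> z")
    case True
    obtain n where zn: "z \<in> Gs X E M (nbhd_set E U0) n" using zG unfolding G_def by blast
    show ?thesis using prop_conn[of U0 n] W W' True h zn unfolding U0_def M_def by blast
  next
    case False
    have "\<exists>x\<in>X. W x z < W' x z"
    proof (rule ccontr)
      assume "\<not> ?thesis"
      then have "\<forall>x\<in>X. W' x z \<le> W x z" by (auto simp: not_less)
      then have "colsum X W' z \<le> colsum X W z" unfolding colsum_def by (intro sum_mono) auto
      then show False using False h by simp
    qed
    then obtain x where "x \<in> X" "W x z < W' x z" by blast
    then show ?thesis using imp_direct[OF W W' zX h] by blast
  qed
qed

lemma dd_nonneg: "0 \<le> dd X W W'"
  unfolding dd_def by (intro sum_nonneg) auto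

lemma conn: "W \<in> AS \<Longrightarrow> W' \<in> AS \<Longrightarrow> (W, W') \<in> reach"
proof (induction "nat (dd X W W')" arbitrary: W W' rule: less_induct)
  case less
  show ?case
  proof (cases "W = W'")
    case True then show ?thesis by simp
  next
    case False
    obtain W2 W2' where W2: "W2 \<in> AS" "W2' \<in> AS" "(W, W2) \<in> reach" "(W', W2') \<in> reach"
      "dd X W2 W2' < dd X W W'" using conn_imp[OF less.prems False] unfolding imp_def by blast
    have "nat (dd X W2 W2') < nat (dd X W W')" using W2(5) dd_nonneg[of W2 W2'] by linarith
    then have "(W2, W2') \<in> reach" using less.hyps W2(1,2) by blast
    then have "(W, W2') \<in> reach" using W2(3) by (meson rtrancl_trans)
    then show ?thesis using reach_sym[OF W2(4)] by (meson rtrancl_trans)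
  qed
qed


end

locale chain = setting X E \<alpha> \<beta> for X :: "'a set" and E \<alpha> \<beta> +
  fixes lam :: "'a \<Rightarrow> real" and kc ka \<gamma> \<nu> :: real and Pall Pdis :: "'a mat \<Rightarrow> 'a \<Rightarrow> real"
  assumes nu: "\<nu> > 0"
    and P_nonneg: "\<And>W x. W \<in> partial_states X E \<alpha> \<beta> \<Longrightarrow> x \<in> X \<Longrightarrow> Pall W x \<ge> 0 \<and> Pdis W x \<ge> 0"
    and P_sum: "\<And>W x. W \<in> partial_states X E \<alpha> \<beta> \<Longrightarrow> x \<in> X \<Longrightarrow> Pall W x + Pdis W x = 1"
    and P_all0: "\<And>W x. W \<in> partial_states X E \<alpha> \<beta> \<Longrightarrow> x \<in> X \<Longrightarrow> rowsum X W x = \<alpha> x \<Longrightarrow> Pall W x = 0"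
begin

abbreviation "q \<equiv> rate X E \<alpha> \<beta> lam kc ka \<gamma> \<nu> Pall Pdis"
abbreviation "pc \<equiv> pchoice X E \<beta> lam kc ka \<gamma>"
abbreviation "F \<equiv> Fm X \<alpha> \<beta> lam kc ka \<gamma>"

definition g where
  "g W W' x yb ys = \<nu> * real (W x yb) *
     (if ys \<in> avail X E \<beta> (msub W (eunit x yb)) x \<and> madd (msub W (eunit x yb)) (eunit x ys) = W'
      then pc (msub W (eunit x yb)) x ys else 0)"

lemma avail_X: "avail X E \<beta> V x \<subseteq> X"
  using nbhd_X by (auto simp: avail_def)

lemma sum_restrict_if:
  assumes "B \<subseteq> X"
  shows "(\<Sum>y\<in>B. if P y then f y else 0) = (\<Sum>y\<in>X. if y \<in> B \<and> P y then (f y :: real) else 0)"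
proof -
  have "(\<Sum>y\<in>X. if y \<in> B \<and> P y then f y else 0) = (\<Sum>y\<in>X. if y \<in> B then (if P y then f y else 0) else 0)"
    by (intro sum.cong) auto
  also have "\<dots> = (\<Sum>y\<in>X \<inter> B. if P y then f y else 0)" by (rule sum.inter_restrict[OF fin, symmetric])
  also have "X \<inter> B = B" using assms by blast
  finally show ?thesis by simp
qed

lemma rate_eq:
  assumes W: "W \<in> AS"
  shows "q W W' = (\<Sum>x\<in>X. \<Sum>yb\<in>X. \<Sum>ys\<in>X. g W W' x yb ys)"
  unfolding rate_def
proof (rule sum.cong[OF refl])
  fix x assume x: "x \<in> X"
  have Pa: "Pall W x = 0" using P_all0[OF as_ps[OF W] x as_row[OF W x]] .
  have Pd: "Pdis W x = 1" using P_sum[OF as_ps[OF W] x] Pa by simp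
  have rs: "rowsum X W x = \<alpha> x" by (rule as_row[OF W x])
  define T where "T yb = (\<Sum>ys\<in>X. if ys \<in> avail X E \<beta> (msub W (eunit x yb)) x \<and> madd (msub W (eunit x yb)) (eunit x ys) = W'
      then pc (msub W (eunit x yb)) x ys else 0)" for yb
  have inner: "(\<Sum>ys\<in>avail X E \<beta> (msub W (eunit x yb)) x.
      if madd (msub W (eunit x yb)) (eunit x ys) = W' then pc (msub W (eunit x yb)) x ys else 0) = T yb" for yb
    unfolding T_def by (rule sum_restrict_if[OF avail_X])
  have key: "\<nu> * real (\<alpha> x) * (real (W x yb) / real (\<alpha> x) * T yb) = \<nu> * real (W x yb) * T yb" if yb: "yb \<in> X" for yb
  proof (cases "\<alpha> x = 0")
    case True
    then have "W x yb = 0" using le_rowsum[OF yb, of W x] rs by simp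
    then show ?thesis by simp
  next
    case False then show ?thesis by simp
  qed
  have "\<nu> * real (\<alpha> x) * (Pall W x * (\<Sum>ys\<in>avail X E \<beta> W x. if madd W (eunit x ys) = W' then pc W x ys else 0) +
        Pdis W x * (\<Sum>yb\<in>X. real (W x yb) / real (rowsum X W x) * (\<Sum>ys\<in>avail X E \<beta> (msub W (eunit x yb)) x.
          if madd (msub W (eunit x yb)) (eunit x ys) = W' then pc (msub W (eunit x yb)) x ys else 0)))
      = \<nu> * real (\<alpha> x) * (\<Sum>yb\<in>X. real (W x yb) / real (\<alpha> x) * T yb)"
    using Pa Pd rs inner by simp
  also have "\<dots> = (\<Sum>yb\<in>X. \<nu> * real (\<alpha> x) * (real (W x yb) / real (\<alpha> x) * T yb))"
    by (rule sum_distrib_left)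
  also have "\<dots> = (\<Sum>yb\<in>X. \<nu> * real (W x yb) * T yb)"
    using key by (intro sum.cong) auto
  also have "\<dots> = (\<Sum>yb\<in>X. \<Sum>ys\<in>X. g W W' x yb ys)"
    unfolding T_def g_def by (intro sum.cong refl) (simp add: sum_distrib_left)
  finally show "\<nu> * real (\<alpha> x) * (Pall W x * (\<Sum>ys\<in>avail X E \<beta> W x. if madd W (eunit x ys) = W' then pc W x ys else 0) +
        Pdis W x * (\<Sum>yb\<in>X. real (W x yb) / real (rowsum X W x) * (\<Sum>ys\<in>avail X E \<beta> (msub W (eunit x yb)) x.
          if madd (msub W (eunit x yb)) (eunit x ys) = W' then pc (msub W (eunit x yb)) x ys else 0)))
      = (\<Sum>yb\<in>X. \<Sum>ys\<in>X. g W W' x yb ys)" .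
qed

lemma cond_swap:
  assumes W: "W \<in> AS" and x: "x \<in> X" and yb: "yb \<in> X" and pos: "W x yb > 0"
    and eq: "madd (msub W (eunit x yb)) (eunit x ys) = W'"
  shows "W' x ys > 0 \<and> msub W' (eunit x ys) = msub W (eunit x yb) \<and>
         yb \<in> avail X E \<beta> (msub W (eunit x yb)) x \<and> madd (msub W (eunit x yb)) (eunit x yb) = W"
proof -
  define V where "V = msub W (eunit x yb)"
  have 1: "W' x ys > 0" using eq[symmetric] unfolding V_def by (simp add: madd_eunit_apply)
  have 2: "msub W' (eunit x ys) = V"
    using eq[symmetric] unfolding V_def by (auto simp: fun_eq_iff msub_def madd_def eunit_def)
  have 3: "madd V (eunit x yb) = W"
    using pos unfolding V_def by (auto simp: fun_eq_iff msub_def madd_def eunit_def)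
  have e: "(x, yb) \<in> E" by (rule ps_pos_E[OF as_ps[OF W] pos])
  have "colsum X W yb = colsum X V yb + 1"
    using colsum_madd[OF fin x, of V yb yb] 3 by simp
  moreover have "colsum X W yb \<le> \<beta> yb" by (rule ps_col[OF as_ps[OF W] yb])
  ultimately have "colsum X V yb < \<beta> yb" by simp
  then have 4: "yb \<in> avail X E \<beta> V x" using e by (simp add: avail_def nbhd_def)
  show ?thesis using 1 2 3 4 unfolding V_def by blast
qed

lemma pc_eq: "pc V x y = exp (\<gamma> * fval X \<beta> lam kc ka x y (madd V (eunit x y))) /
    (\<Sum>y'\<in>avail X E \<beta> V x. exp (\<gamma> * fval X \<beta> lam kc ka x y' (madd V (eunit x y'))))"
  by (simp add: pchoice_def)

lemma termwise:
  assumes W: "W \<in> AS" and W': "W' \<in> AS" and x: "x \<in> X" and yb: "yb \<in> X" and ys: "ys \<in> X"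
  shows "F W * g W W' x yb ys = F W' * g W' W x ys yb"
proof -
  define V where "V = msub W (eunit x yb)"
  define V' where "V' = msub W' (eunit x ys)"
  define C1 where "C1 = (W x yb > 0 \<and> ys \<in> avail X E \<beta> V x \<and> madd V (eunit x ys) = W')"
  define C2 where "C2 = (W' x ys > 0 \<and> yb \<in> avail X E \<beta> V' x \<and> madd V' (eunit x yb) = W)"
  have g1: "g W W' x yb ys = (if C1 then \<nu> * real (W x yb) * pc V x ys else 0)"
    unfolding g_def C1_def V_def by (cases "W x yb = 0") auto
  have g2: "g W' W x ys yb = (if C2 then \<nu> * real (W' x ys) * pc V' x yb else 0)"
    unfolding g_def C2_def V'_def by (cases "W' x ys = 0") auto
  have c12: "C1 \<Longrightarrow> C2 \<and> V' = V"
    using cond_swap[OF W x yb, of ys W'] unfolding C1_def C2_def V_def V'_def by auto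
  have c21: "C2 \<Longrightarrow> C1"
    using cond_swap[OF W' x ys, of yb W] unfolding C1_def C2_def V_def V'_def by auto
  show ?thesis
  proof (cases C1)
    case False
    then have "\<not> C2" using c21 by blast
    then show ?thesis using False g1 g2 by simp
  next
    case True
    then have C2: C2 and VV: "V' = V" using c12 by auto
    have hW: "madd V (eunit x yb) = W" using C2 VV unfolding C2_def by simp
    have hW': "madd V (eunit x ys) = W'" using True unfolding C1_def by simp
    define Z where "Z = (\<Sum>y'\<in>avail X E \<beta> V x. exp (\<gamma> * fval X \<beta> lam kc ka x y' (madd V (eunit x y'))))"
    define eb where "eb = exp (\<gamma> * fval X \<beta> lam kc ka x yb W)"
    define es where "es = exp (\<gamma> * fval X \<beta> lam kc ka x ys W')"
    have A: "F W * real (W x yb) = F V * eb"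
      using Fm_madd[OF fin x yb, of \<alpha> \<beta> lam kc ka \<gamma> V] unfolding hW eb_def .
    have B: "F W' * real (W' x ys) = F V * es"
      using Fm_madd[OF fin x ys, of \<alpha> \<beta> lam kc ka \<gamma> V] unfolding hW' es_def .
    have ps: "pc V x ys = es / Z" unfolding pc_eq es_def Z_def hW' ..
    have pb: "pc V x yb = eb / Z" unfolding pc_eq eb_def Z_def hW ..
    have "F W * g W W' x yb ys = \<nu> * (F W * real (W x yb)) * pc V x ys" using True g1 by simp
    also have "\<dots> = \<nu> * (F V * eb) * (es / Z)" unfolding A ps ..
    also have "\<dots> = \<nu> * (F V * es) * (eb / Z)" by simp
    also have "\<dots> = \<nu> * (F W' * real (W' x ys)) * pc V x yb" unfolding B pb ..
    also have "\<dots> = F W' * g W' W x ys yb" using C2 g2 VV by simp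
    finally show ?thesis .
  qed
qed

lemma reversible_F:
  assumes W: "W \<in> AS" and W': "W' \<in> AS"
  shows "F W * q W W' = F W' * q W' W"
proof -
  have "F W * q W W' = (\<Sum>x\<in>X. \<Sum>yb\<in>X. \<Sum>ys\<in>X. F W * g W W' x yb ys)"
    unfolding rate_eq[OF W] by (simp add: sum_distrib_left)
  also have "\<dots> = (\<Sum>x\<in>X. \<Sum>yb\<in>X. \<Sum>ys\<in>X. F W' * g W' W x ys yb)"
    using termwise[OF W W'] by (intro sum.cong refl) auto
  also have "\<dots> = (\<Sum>x\<in>X. \<Sum>ys\<in>X. \<Sum>yb\<in>X. F W' * g W' W x ys yb)"
    by (rule sum.cong[OF refl], rule sum.swap)
  also have "\<dots> = F W' * q W' W"
    unfolding rate_eq[OF W'] by (simp add: sum_distrib_left)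
  finally show ?thesis .
qed

lemma pc_nonneg: "pc V x y \<ge> 0"
  unfolding pc_eq by (intro divide_nonneg_nonneg sum_nonneg) auto

lemma q_nonneg: "W \<in> AS \<Longrightarrow> q W W' \<ge> 0"
  unfolding rate_eq g_def using nu pc_nonneg by (intro sum_nonneg) auto

lemma q_pos:
  assumes "(W, W2) \<in> stp"
  shows "q W W2 > 0"
proof -
  obtain x a z where W: "W \<in> AS" and x: "x \<in> X" and a: "a \<in> X" and pos: "W x a > 0" and e: "(x, z) \<in> E"
    and h: "colsum X W z < \<beta> z" and W2: "W2 = mv W x a z"
    using assms unfolding stp_def by blast
  have zX: "z \<in> X" using e E_X by blast
  define V where "V = msub W (eunit x a)"
  have "colsum X V z \<le> colsum X W z"
    unfolding colsum_def V_def msub_def by (intro sum_mono) auto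
  then have zav: "z \<in> avail X E \<beta> V x" using h e by (simp add: avail_def nbhd_def)
  have fa: "finite (avail X E \<beta> V x)" using avail_X fin finite_subset by blast
  have "pc V x z > 0"
    unfolding pc_eq by (intro divide_pos_pos sum_pos fa) (use zav in auto)
  then have gp: "g W W2 x a z > 0"
    unfolding g_def using zav W2 pos nu unfolding mv_def V_def by simp
  have gnn: "g W W2 u b c \<ge> 0" for u b c
    unfolding g_def using nu pc_nonneg by auto
  have "(\<Sum>ys\<in>X. g W W2 x a ys) > 0"
    by (rule sum_pos2[of X z "\<lambda>ys. g W W2 x a ys"]) (use fin zX gp gnn in auto)
  then have "(\<Sum>yb\<in>X. \<Sum>ys\<in>X. g W W2 x yb ys) > 0"
    by (intro sum_pos2[of X a "\<lambda>yb. \<Sum>ys\<in>X. g W W2 x yb ys"]) (use fin a gnn in \<open>auto intro: sum_nonneg\<close>)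
  then have "(\<Sum>u\<in>X. \<Sum>yb\<in>X. \<Sum>ys\<in>X. g W W2 u yb ys) > 0"
    by (intro sum_pos2[of X x "\<lambda>u. \<Sum>yb\<in>X. \<Sum>ys\<in>X. g W W2 u yb ys"]) (use fin x gnn in \<open>auto intro!: sum_nonneg\<close>)
  then show ?thesis unfolding rate_eq[OF W] .
qed

lemma finite_AS: "finite AS"
proof -
  define K where "K = sum \<alpha> X"
  define R where "R = {f :: 'a \<Rightarrow> nat. \<forall>y. (y \<in> X \<longrightarrow> f y \<in> {0..K}) \<and> (y \<notin> X \<longrightarrow> f y = 0)}"
  have fR: "finite R" unfolding R_def by (rule finite_set_of_finite_funs[OF fin]) simp
  define B where "B = {W :: 'a mat. \<forall>x. (x \<in> X \<longrightarrow> W x \<in> R) \<and> (x \<notin> X \<longrightarrow> W x = (\<lambda>_. 0))}"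
  have fB: "finite B" unfolding B_def by (rule finite_set_of_finite_funs[OF fin fR])
  have "AS \<subseteq> B"
  proof
    fix W assume W: "W \<in> AS"
    have out: "W u v = 0" if "u \<notin> X \<or> v \<notin> X" for u v
      using as_outside[OF W, of u v] that by blast
    have bnd: "W u v \<le> K" if "u \<in> X" "v \<in> X" for u v
    proof -
      have "W u v \<le> rowsum X W u" by (rule le_rowsum[OF that(2)])
      also have "\<dots> = \<alpha> u" by (rule as_row[OF W that(1)])
      also have "\<dots> \<le> K" unfolding K_def by (rule member_le_sum) (use that fin in auto)
      finally show ?thesis .
    qed
    show "W \<in> B" unfolding B_def R_def using out bnd by auto
  qed
  then show ?thesis using fB finite_subset by blast
qed

definition Zs where "Zs = (\<Sum>W\<in>AS. F W)"

lemma Zs_pos: "Zs > 0"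
proof -
  obtain W0 where "W0 \<in> AS" using exists_alloc by blast
  then show ?thesis unfolding Zs_def
    by (intro sum_pos2[of AS W0 F]) (use finite_AS Fm_pos[THEN less_imp_le] Fm_pos in auto)
qed

abbreviation "m \<equiv> mu X E \<alpha> \<beta> lam kc ka \<gamma>"

lemma m_eq: "m W = F W / Zs"
  by (simp add: mu_def Fm_def Zs_def)

lemma m_pos: "m W > 0"
  unfolding m_eq by (rule divide_pos_pos[OF Fm_pos Zs_pos])

lemma rev: "W \<in> AS \<Longrightarrow> W' \<in> AS \<Longrightarrow> m W * q W W' = m W' * q W' W"
  unfolding m_eq using reversible_F[of W W'] by (simp add: field_simps)

lemma q_rev_pos: "W \<in> AS \<Longrightarrow> W' \<in> AS \<Longrightarrow> q W W' > 0 \<Longrightarrow> q W' W > 0"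
proof -
  assume W: "W \<in> AS" and W': "W' \<in> AS" and p: "q W W' > 0"
  have "m W * q W W' > 0" using m_pos p by simp
  then have "m W' * q W' W > 0" using rev[OF W W'] by simp
  then show ?thesis using m_pos[of W'] by (simp add: zero_less_mult_iff)
qed

lemma stp_AS: "(W, W2) \<in> stp \<Longrightarrow> W \<in> AS \<and> W2 \<in> AS"
  unfolding stp_def using mv_as by blast

lemma irred: "irreducible_on AS q"
  unfolding irreducible_on_def
proof (intro ballI)
  fix a b assume a: "a \<in> AS" and b: "b \<in> AS"
  define rel where "rel = {(u, v). u \<in> AS \<and> v \<in> AS \<and> u \<noteq> v \<and> q u v > 0}"
  have sub: "stp \<union> stp\<inverse> \<subseteq> rel\<^sup>*"
  proof
    fix p assume "p \<in> stp \<union> stp\<inverse>"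
    then obtain u v where p: "p = (u, v)" and uv: "(u, v) \<in> stp \<or> (v, u) \<in> stp" by (cases p) auto
    show "p \<in> rel\<^sup>*"
    proof (cases "u = v")
      case True then show ?thesis using p by simp
    next
      case False
      from uv show ?thesis
      proof
        assume s: "(u, v) \<in> stp"
        then have "(u, v) \<in> rel" unfolding rel_def using stp_AS[OF s] q_pos[OF s] False by auto
        then show ?thesis using p by blast
      next
        assume s: "(v, u) \<in> stp"
        then have "q u v > 0" using stp_AS[OF s] q_pos[OF s] q_rev_pos by blast
        then have "(u, v) \<in> rel" unfolding rel_def using stp_AS[OF s] False by auto
        then show ?thesis using p by blast
      qed
    qed
  qed
  have "(a, b) \<in> reach" by (rule conn[OF a b])
  then have "(a, b) \<in> rel\<^sup>*" using rtrancl_subset_rtrancl[OF sub] by blast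
  then show "(a, b) \<in> {(u, v). u \<in> AS \<and> v \<in> AS \<and> u \<noteq> v \<and> q u v > 0}\<^sup>*" unfolding rel_def .
qed

lemma revers: "reversible_on AS q m"
  unfolding reversible_on_def using rev by blast

lemma sum_m: "(\<Sum>a\<in>AS. m a) = 1"
  unfolding m_eq Zs_def[symmetric] sum_divide_distrib[symmetric] using Zs_pos by (simp add: Zs_def)

lemma invar: "invariant_prob_on AS q m"
  unfolding invariant_prob_on_def
proof (intro conjI ballI)
  fix a show "m a \<ge> 0" using m_pos[of a] by simp
next
  show "(\<Sum>a\<in>AS. m a) = 1" by (rule sum_m)
next
  fix b assume b: "b \<in> AS"
  have "(\<Sum>a\<in>AS - {b}. m a * q a b) = (\<Sum>a\<in>AS - {b}. m b * q b a)"
    using rev b by (intro sum.cong) auto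
  also have "\<dots> = m b * (\<Sum>c\<in>AS - {b}. q b c)" by (simp add: sum_distrib_left)
  finally show "(\<Sum>a\<in>AS - {b}. m a * q a b) = m b * (\<Sum>c\<in>AS - {b}. q b c)" .
qed

lemma unique:
  assumes pi: "invariant_prob_on AS q \<pi>"
  shows "\<forall>W\<in>AS. \<pi> W = m W"
proof -
  define h where "h a = \<pi> a / m a" for a
  have pih: "\<pi> a = h a * m a" for a unfolding h_def using m_pos[of a] by simp
  have bal: "\<And>b. b \<in> AS \<Longrightarrow> (\<Sum>a\<in>AS - {b}. \<pi> a * q a b) = \<pi> b * (\<Sum>c\<in>AS - {b}. q b c)"
    using pi unfolding invariant_prob_on_def by blast
  have sum1: "(\<Sum>a\<in>AS. \<pi> a) = 1" using pi unfolding invariant_prob_on_def by blast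
  obtain W0 where W0: "W0 \<in> AS" using exists_alloc by blast
  define Mx where "Mx = Max (h ` AS)"
  have Mx_ge: "h a \<le> Mx" if "a \<in> AS" for a unfolding Mx_def using finite_AS that by simp
  have "Mx \<in> h ` AS" unfolding Mx_def using finite_AS W0 by (intro Max_in) auto
  then obtain b0 where b0: "b0 \<in> AS" "h b0 = Mx" by blast
  have hprop: "h a = Mx" if b: "b \<in> AS" "h b = Mx" and a: "a \<in> AS" "a \<noteq> b" "q b a > 0" for a b
  proof -
    have "(\<Sum>a\<in>AS - {b}. \<pi> a * q a b) = (\<Sum>a\<in>AS - {b}. h a * (m b * q b a))"
      using rev b(1) by (intro sum.cong) (auto simp: pih mult.assoc)
    also have "\<dots> = m b * (\<Sum>a\<in>AS - {b}. h a * q b a)" by (simp add: sum_distrib_left ac_simps)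
    finally have e1: "(\<Sum>a\<in>AS - {b}. \<pi> a * q a b) = m b * (\<Sum>a\<in>AS - {b}. h a * q b a)" .
    have "\<pi> b * (\<Sum>c\<in>AS - {b}. q b c) = m b * (\<Sum>c\<in>AS - {b}. h b * q b c)"
      by (simp add: pih sum_distrib_left ac_simps)
    then have "m b * (\<Sum>a\<in>AS - {b}. h a * q b a) = m b * (\<Sum>c\<in>AS - {b}. h b * q b c)"
      using bal[OF b(1)] e1 by simp
    then have "(\<Sum>a\<in>AS - {b}. h a * q b a) = (\<Sum>c\<in>AS - {b}. h b * q b c)"
      using m_pos[of b] by simp
    then have z: "(\<Sum>c\<in>AS - {b}. (h b - h c) * q b c) = 0"
      by (simp add: left_diff_distrib sum_subtractf)
    have nn: "\<forall>c\<in>AS - {b}. 0 \<le> (h b - h c) * q b c"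
      using Mx_ge b q_nonneg[OF b(1)] by (auto intro!: mult_nonneg_nonneg)
    have "(h b - h a) * q b a = 0"
      using sum_nonneg_eq_0_iff[of "AS - {b}" "\<lambda>c. (h b - h c) * q b c"] z nn finite_AS a by auto
    then show ?thesis using a(3) b(2) by simp
  qed
  have allM: "h a = Mx" if a: "a \<in> AS" for a
  proof -
    have "(b0, a) \<in> {(u, v). u \<in> AS \<and> v \<in> AS \<and> u \<noteq> v \<and> q u v > 0}\<^sup>*"
      using irred b0(1) a unfolding irreducible_on_def by blast
    then show ?thesis
    proof (induction rule: rtrancl_induct)
      case base then show ?case using b0 by simp
    next
      case (step y z) then show ?case using hprop by blast
    qed
  qed
  have "1 = (\<Sum>a\<in>AS. Mx * m a)" using sum1 allM by (simp add: pih)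
  also have "\<dots> = Mx" by (simp add: sum_distrib_left[symmetric] sum_m)
  finally have "Mx = 1" by simp
  then show ?thesis using allM pih by simp
qed

end

theorem corollary1:
  fixes X :: "'a set" and E :: "('a \<times> 'a) set"
    and \<alpha> \<beta> :: "'a \<Rightarrow> nat" and lam :: "'a \<Rightarrow> real"
    and kc ka \<gamma> \<nu> :: real
    and Pall Pdis :: "('a \<Rightarrow> 'a \<Rightarrow> nat) \<Rightarrow> 'a \<Rightarrow> real"
  assumes fin: "finite X"
    and edges: "E \<subseteq> X \<times> X"
    and kc: "kc \<ge> 0" and ka: "ka \<ge> 0" and gamma: "\<gamma> > 0" and nu: "\<nu> > 0"
    and P_nonneg: "\<And>W x. W \<in> partial_states X E \<alpha> \<beta> \<Longrightarrow> x \<in> X \<Longrightarrow>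
                       Pall W x \<ge> 0 \<and> Pdis W x \<ge> 0"
    and P_sum: "\<And>W x. W \<in> partial_states X E \<alpha> \<beta> \<Longrightarrow> x \<in> X \<Longrightarrow>
                       Pall W x + Pdis W x = 1"
    and P_all0: "\<And>W x. W \<in> partial_states X E \<alpha> \<beta> \<Longrightarrow> x \<in> X \<Longrightarrow>
                       rowsum X W x = \<alpha> x \<Longrightarrow> Pall W x = 0"
    and P_dis0: "\<And>W x. W \<in> partial_states X E \<alpha> \<beta> \<Longrightarrow> x \<in> X \<Longrightarrow>
                       rowsum X W x = 0 \<Longrightarrow> Pdis W x = 0"
    and hall: "\<And>A. A \<subseteq> X \<Longrightarrow> A \<noteq> {} \<Longrightarrow>
                 (\<Sum>x\<in>A. \<alpha> x) < (\<Sum>y\<in>nbhd_set E A. \<beta> y)"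
  shows "irreducible_on (alloc_states X E \<alpha> \<beta>)
            (rate X E \<alpha> \<beta> lam kc ka \<gamma> \<nu> Pall Pdis)
       \<and> reversible_on (alloc_states X E \<alpha> \<beta>)
            (rate X E \<alpha> \<beta> lam kc ka \<gamma> \<nu> Pall Pdis) (mu X E \<alpha> \<beta> lam kc ka \<gamma>)
       \<and> invariant_prob_on (alloc_states X E \<alpha> \<beta>)
            (rate X E \<alpha> \<beta> lam kc ka \<gamma> \<nu> Pall Pdis) (mu X E \<alpha> \<beta> lam kc ka \<gamma>)
       \<and> (\<forall>\<pi>. invariant_prob_on (alloc_states X E \<alpha> \<beta>)
                 (rate X E \<alpha> \<beta> lam kc ka \<gamma> \<nu> Pall Pdis) \<pi> \<longrightarrow>
               (\<forall>W\<in>alloc_states X E \<alpha> \<beta>. \<pi> W = mu X E \<alpha> \<beta> lam kc ka \<gamma> W))"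
proof -
  interpret chain X E \<alpha> \<beta> lam kc ka \<gamma> \<nu> Pall Pdis
    apply unfold_locales
          apply (rule fin)
         apply (rule edges)
        apply (rule hall, assumption+)
       apply (rule nu)
      apply (rule P_nonneg, assumption+)
     apply (rule P_sum, assumption+)
    apply (rule P_all0, assumption+)
    done
  show ?thesis
    apply (intro conjI allI impI)
       apply (rule irred)
      apply (rule revers)
     apply (rule invar)
    apply (erule unique)
    done
qed

end
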